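(* Let $G$ be a $K_4$-minor-free graph, $xx'$ an edge of $G$, and $y,z$ distinct vertices of $G$ not in $\{x,x'\}$. Then at least one of the sets $\{x,y,z\}$ and $\{x',y,z\}$ is feasible.
   Context: $K_4$-minor-free graphs are $3$-colorable. For $n\in\mathbb{N}$, the chain of diamonds $D_n$ is the graph with vertex set $\{u_i,v_i,w_i:i\in[n]\}\cup\{u_0\}$ and edge set $\{u_{i-1}v_i,u_{i-1}w_i,v_iw_i,v_iu_i,w_iu_i: i\in[n]\}$; let $U(D_n)=\{u_0,\dots,u_n\}$. A set $X$ of distinct vertices of $G$ is connected by a chain of diamonds if there exist $n\in\mathbb{N}$ and a graph homomorphism $\varphi:D_n\to G$ with $X\subseteq\varphi(U(D_n))$. A set $X$ of three distinct vertices of $G$ is feasible if $X$ is not connected by a chain of diamonds and there is a proper $3$-coloring $\phi$ of $G$ with $|\phi(X)|\le 2$. *)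

theory Defs
  imports Main
begin

definition simple_graph :: "'a set \<Rightarrow> ('a \<Rightarrow> 'a \<Rightarrow> bool) \<Rightarrow> bool" where
  "simple_graph V E \<longleftrightarrow> finite V \<and> (\<forall>u v. E u v \<longrightarrow> u \<in> V \<and> v \<in> V)
     \<and> (\<forall>u v. E u v \<longrightarrow> E v u) \<and> (\<forall>u. \<not> E u u)"

definition connected_set :: "'a set \<Rightarrow> ('a \<Rightarrow> 'a \<Rightarrow> bool) \<Rightarrow> 'a set \<Rightarrow> bool" where
  "connected_set V E B \<longleftrightarrow> B \<noteq> {} \<and> B \<subseteq> V \<and>
     (\<forall>a\<in>B. \<forall>b\<in>B. (\<lambda>u v. u \<in> B \<and> v \<in> B \<and> E u v)\<^sup>*\<^sup>* a b)"

definition has_K4_minor :: "'a set \<Rightarrow> ('a \<Rightarrow> 'a \<Rightarrow> bool) \<Rightarrow> bool" where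
  "has_K4_minor V E \<longleftrightarrow> (\<exists>B :: nat \<Rightarrow> 'a set.
     (\<forall>i<4. connected_set V E (B i)) \<and>
     (\<forall>i<4. \<forall>j<4. i \<noteq> j \<longrightarrow> B i \<inter> B j = {}) \<and>
     (\<forall>i<4. \<forall>j<4. i \<noteq> j \<longrightarrow> (\<exists>a\<in>B i. \<exists>b\<in>B j. E a b)))"

definition K4_minor_free :: "'a set \<Rightarrow> ('a \<Rightarrow> 'a \<Rightarrow> bool) \<Rightarrow> bool" where
  "K4_minor_free V E \<longleftrightarrow> \<not> has_K4_minor V E"

text \<open>A graph homomorphism from the chain of diamonds D_n into G, given by the images
u i (i = 0..n), v i, w i (i = 1..n).\<close>
definition diamond_chain_hom ::
  "'a set \<Rightarrow> ('a \<Rightarrow> 'a \<Rightarrow> bool) \<Rightarrow> nat \<Rightarrow> (nat \<Rightarrow> 'a) \<Rightarrow> (nat \<Rightarrow> 'a) \<Rightarrow> (nat \<Rightarrow> 'a) \<Rightarrow> bool" where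
  "diamond_chain_hom V E n u v w \<longleftrightarrow>
     (\<forall>i\<in>{0..n}. u i \<in> V) \<and> (\<forall>i\<in>{1..n}. v i \<in> V \<and> w i \<in> V) \<and>
     (\<forall>i\<in>{1..n}. E (u (i - 1)) (v i) \<and> E (u (i - 1)) (w i) \<and> E (v i) (w i)
                  \<and> E (v i) (u i) \<and> E (w i) (u i))"

definition connected_by_diamonds :: "'a set \<Rightarrow> ('a \<Rightarrow> 'a \<Rightarrow> bool) \<Rightarrow> 'a set \<Rightarrow> bool" where
  "connected_by_diamonds V E X \<longleftrightarrow>
     (\<exists>n u v w. diamond_chain_hom V E n u v w \<and> X \<subseteq> u ` {0..n})"

definition proper_3_coloring :: "'a set \<Rightarrow> ('a \<Rightarrow> 'a \<Rightarrow> bool) \<Rightarrow> ('a \<Rightarrow> nat) \<Rightarrow> bool" where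
  "proper_3_coloring V E c \<longleftrightarrow> (\<forall>x\<in>V. c x < 3) \<and> (\<forall>x y. E x y \<longrightarrow> c x \<noteq> c y)"

definition feasible :: "'a set \<Rightarrow> ('a \<Rightarrow> 'a \<Rightarrow> bool) \<Rightarrow> 'a set \<Rightarrow> bool" where
  "feasible V E X \<longleftrightarrow> X \<subseteq> V \<and> card X = 3 \<and> \<not> connected_by_diamonds V E X \<and>
     (\<exists>c. proper_3_coloring V E c \<and> card (c ` X) \<le> 2)"

end

theory Submission
  imports Defs
begin

lemma sym_rtc:
  assumes "\<And>a b. R a b \<Longrightarrow> R b a" and "R\<^sup>*\<^sup>* a b"
  shows "R\<^sup>*\<^sup>* b a"
  using assms(2)
proof (induction rule: rtranclp_induct)
  case base then show ?case by simp
next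
  case (step y z)
  have "R z y" using step(2) assms(1) by blast
  then show ?case using step(3) by (rule converse_rtranclp_into_rtranclp)
qed

lemma connected_mono:
  assumes "connected_set V' E' B" "V' \<subseteq> V" "\<And>a b. E' a b \<Longrightarrow> E a b"
  shows "connected_set V E B"
proof -
  have "\<And>a b. (\<lambda>u v. u \<in> B \<and> v \<in> B \<and> E' u v)\<^sup>*\<^sup>* a b \<Longrightarrow> (\<lambda>u v. u \<in> B \<and> v \<in> B \<and> E u v)\<^sup>*\<^sup>* a b"
    by (rule rtranclp_mono[THEN predicate2D]) (auto simp: assms(3))
  then show ?thesis using assms(1,2) unfolding connected_set_def by blast
qed

lemma subgraph_lift:
  assumes "has_K4_minor V' E'" "V' \<subseteq> V" "\<And>a b. E' a b \<Longrightarrow> E a b"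
  shows "has_K4_minor V E"
proof -
  obtain B :: "nat \<Rightarrow> _ set" where B: "\<forall>i<4. connected_set V' E' (B i)"
     "\<forall>i<4. \<forall>j<4. i \<noteq> j \<longrightarrow> B i \<inter> B j = {}"
     "\<forall>i<4. \<forall>j<4. i \<noteq> j \<longrightarrow> (\<exists>a\<in>B i. \<exists>b\<in>B j. E' a b)"
    using assms(1) unfolding has_K4_minor_def by blast
  have "\<forall>i<4. connected_set V E (B i)" using B(1) connected_mono assms(2,3) by blast
  moreover have "\<forall>i<4. \<forall>j<4. i \<noteq> j \<longrightarrow> (\<exists>a\<in>B i. \<exists>b\<in>B j. E a b)" using B(3) assms(3) by blast
  ultimately show ?thesis using B(2) unfolding has_K4_minor_def by blast
qed

definition ctr :: "('a \<Rightarrow> 'a \<Rightarrow> bool) \<Rightarrow> 'a \<Rightarrow> 'a \<Rightarrow> 'a \<Rightarrow> 'a \<Rightarrow> bool" where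
  "ctr E u v = (\<lambda>a b. a \<noteq> b \<and> a \<noteq> v \<and> b \<noteq> v \<and> (E a b \<or> (a = u \<and> E v b) \<or> (b = u \<and> E a v)))"

lemma ctr_path_lift:
  assumes sym: "\<And>a b. E a b \<Longrightarrow> E b a" and uv: "E u v"
    and "(\<lambda>x y. x \<in> B \<and> y \<in> B \<and> ctr E u v x y)\<^sup>*\<^sup>* a b"
  shows "(\<lambda>x y. x \<in> (if u \<in> B then insert v B else B) \<and> y \<in> (if u \<in> B then insert v B else B) \<and> E x y)\<^sup>*\<^sup>* a b"
  using assms(3)
proof (induction rule: rtranclp_induct)
  case base then show ?case by simp
next
  case (step y z)
  let ?B2 = "if u \<in> B then insert v B else B"
  let ?R = "\<lambda>x y. x \<in> ?B2 \<and> y \<in> ?B2 \<and> E x y"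
  have yz: "y \<in> B" "z \<in> B" "ctr E u v y z" using step(2) by auto
  have "?R\<^sup>*\<^sup>* y z"
  proof -
    consider "E y z" | "y = u \<and> E v z" | "z = u \<and> E y v" using yz(3) unfolding ctr_def by blast
    then show ?thesis
    proof cases
      case 1 then show ?thesis using yz by auto
    next
      case 2
      have r1: "?R y v" and r2: "?R v z" using 2 yz uv by auto
      show ?thesis by (rule converse_rtranclp_into_rtranclp[of ?R, OF r1 r_into_rtranclp[of ?R, OF r2]])
    next
      case 3
      have r1: "?R y v" and r2: "?R v z" using 3 yz uv sym by auto
      show ?thesis by (rule converse_rtranclp_into_rtranclp[of ?R, OF r1 r_into_rtranclp[of ?R, OF r2]])
    qed
  qed
  then show ?case using step(3) by (rule rtranclp_trans[rotated])
qed

lemma ctr_connected_lift: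
  assumes sg: "simple_graph V E" and uv: "E u v"
    and c: "connected_set (V - {v}) (ctr E u v) B"
  shows "connected_set V E (if u \<in> B then insert v B else B)"
proof -
  let ?B2 = "if u \<in> B then insert v B else B"
  let ?R = "\<lambda>x y. x \<in> ?B2 \<and> y \<in> ?B2 \<and> E x y"
  have sym: "\<And>a b. E a b \<Longrightarrow> E b a" using sg unfolding simple_graph_def by blast
  have vV: "v \<in> V" using sg uv unfolding simple_graph_def by blast
  have inB: "\<And>a b. a \<in> B \<Longrightarrow> b \<in> B \<Longrightarrow> ?R\<^sup>*\<^sup>* a b"
    using c ctr_path_lift[of E, OF sym uv] unfolding connected_set_def by blast
  have Rsym: "\<And>a b. ?R a b \<Longrightarrow> ?R b a" using sym by blast
  have all: "\<And>a b. a \<in> ?B2 \<Longrightarrow> b \<in> ?B2 \<Longrightarrow> ?R\<^sup>*\<^sup>* a b"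
  proof -
    fix a b assume a: "a \<in> ?B2" and b: "b \<in> ?B2"
    show "?R\<^sup>*\<^sup>* a b"
    proof (cases "u \<in> B")
      case False then show ?thesis using a b inB by simp
    next
      case True
      have uv2: "?R u v" using True uv by simp
      have toU: "\<And>x. x \<in> ?B2 \<Longrightarrow> ?R\<^sup>*\<^sup>* u x"
      proof -
        fix x assume "x \<in> ?B2"
        then consider "x = v" | "x \<in> B" using True by auto
        then show "?R\<^sup>*\<^sup>* u x"
        proof cases
          case 1 then show ?thesis using uv2 by blast
        next
          case 2 then show ?thesis using inB True by blast
        qed
      qed
      have "?R\<^sup>*\<^sup>* a u" using toU[OF a] sym_rtc[of ?R, OF Rsym] by blast
      then show ?thesis using toU[OF b] by (rule rtranclp_trans)
    qed
  qed
  have "B \<noteq> {}" "B \<subseteq> V - {v}" using c unfolding connected_set_def by blast+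
  then have "?B2 \<noteq> {}" "?B2 \<subseteq> V" using vV by auto
  then show ?thesis using all unfolding connected_set_def by blast
qed

lemma contract_lift:
  assumes sg: "simple_graph V E" and uv: "E u v"
    and K: "has_K4_minor (V - {v}) (ctr E u v)"
  shows "has_K4_minor V E"
proof -
  obtain B :: "nat \<Rightarrow> _ set" where B: "\<forall>i<4. connected_set (V - {v}) (ctr E u v) (B i)"
     "\<forall>i<4. \<forall>j<4. i \<noteq> j \<longrightarrow> B i \<inter> B j = {}"
     "\<forall>i<4. \<forall>j<4. i \<noteq> j \<longrightarrow> (\<exists>a\<in>B i. \<exists>b\<in>B j. ctr E u v a b)"
    using K unfolding has_K4_minor_def by blast
  define B2 where "B2 i = (if u \<in> B i then insert v (B i) else B i)" for i
  have sym: "\<And>a b. E a b \<Longrightarrow> E b a" using sg unfolding simple_graph_def by blast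
  have vnot: "\<And>i. i < 4 \<Longrightarrow> v \<notin> B i" using B(1) unfolding connected_set_def by blast
  have "\<forall>i<4. connected_set V E (B2 i)"
  proof (intro allI impI)
    fix i :: nat assume "i < 4"
    then show "connected_set V E (B2 i)" unfolding B2_def using B(1) ctr_connected_lift[OF sg uv] by blast
  qed
  moreover have "\<forall>i<4. \<forall>j<4. i \<noteq> j \<longrightarrow> B2 i \<inter> B2 j = {}"
  proof (intro allI impI)
    fix i j :: nat assume "i < 4" "j < 4" "i \<noteq> j"
    then show "B2 i \<inter> B2 j = {}" using B(2) vnot unfolding B2_def by auto
  qed
  moreover have "\<forall>i<4. \<forall>j<4. i \<noteq> j \<longrightarrow> (\<exists>a\<in>B2 i. \<exists>b\<in>B2 j. E a b)"
  proof (intro allI impI)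
    fix i j :: nat assume "i < 4" "j < 4" "i \<noteq> j"
    then obtain a b where ab: "a \<in> B i" "b \<in> B j" "ctr E u v a b" using B(3) by blast
    then consider "E a b" | "a = u \<and> E v b" | "b = u \<and> E a v" unfolding ctr_def by blast
    then show "\<exists>a\<in>B2 i. \<exists>b\<in>B2 j. E a b"
    proof cases
      case 1 then show ?thesis using ab unfolding B2_def by auto
    next
      case 2 then show ?thesis using ab unfolding B2_def by auto
    next
      case 3 then show ?thesis using ab unfolding B2_def by auto
    qed
  qed
  ultimately show ?thesis unfolding has_K4_minor_def by blast
qed

lemma sg_facts:
  assumes "simple_graph V E"
  shows "finite V" "\<And>a b. E a b \<Longrightarrow> a \<in> V" "\<And>a b. E a b \<Longrightarrow> b \<in> V"
    "\<And>a b. E a b \<Longrightarrow> E b a" "\<And>a. \<not> E a a"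
  using assms unfolding simple_graph_def by blast+

lemma nb_finite: "simple_graph V E \<Longrightarrow> finite {w. E v w}"
  using sg_facts[of V E] by (metis (no_types, lifting) finite_subset mem_Collect_eq subsetI)

lemma edges_finite: "simple_graph V E \<Longrightarrow> finite {(a,b). E a b}"
proof -
  assume sg: "simple_graph V E"
  have "{(a,b). E a b} \<subseteq> V \<times> V" using sg_facts[OF sg] by auto
  then show ?thesis using sg_facts(1)[OF sg] by (meson finite_SigmaI finite_subset)
qed

lemma ctr_simple:
  assumes sg: "simple_graph V E" and uv: "E u v"
  shows "simple_graph (V - {v}) (ctr E u v)"
proof -
  note f = sg_facts[OF sg]
  have "u \<in> V" using f uv by blast
  then show ?thesis using f unfolding simple_graph_def ctr_def by blast
qed

lemma ctr_nb_u:
  assumes sg: "simple_graph V E" and uv: "E u v"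
  shows "{w. ctr E u v u w} = ({w. E u w} \<union> {w. E v w}) - {u,v}"
  using sg_facts[OF sg] uv unfolding ctr_def by auto

lemma ctr_nb_sub:
  assumes sg: "simple_graph V E" and uv: "E u v" and w: "w \<noteq> u" "w \<noteq> v"
  shows "{x. E w x} - {v} \<subseteq> {x. ctr E u v w x}"
  using sg_facts[OF sg] uv w unfolding ctr_def by auto

lemma ctr_nb_card:
  assumes sg: "simple_graph V E" and uv: "E u v" and w: "w \<noteq> u" "w \<noteq> v"
  shows "card {x. E w x} \<le> card {x. ctr E u v w x} + (if E w u \<and> E w v then 1 else 0)"
proof -
  note f = sg_facts[OF sg]
  have fin2: "finite {x. ctr E u v w x}"
    using nb_finite[OF ctr_simple[OF sg uv]] by blast
  have fin1: "finite {x. E w x}" using nb_finite[OF sg] by blast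
  show ?thesis
  proof (cases "E w v")
    case False
    then have "{x. E w x} \<subseteq> {x. ctr E u v w x}" using ctr_nb_sub[OF sg uv w] by auto
    then have "card {x. E w x} \<le> card {x. ctr E u v w x}" by (rule card_mono[OF fin2])
    then show ?thesis by simp
  next
    case True
    show ?thesis
    proof (cases "E w u")
      case True
      have "card {x. E w x} - 1 = card ({x. E w x} - {v})" using \<open>E w v\<close> fin1 by simp
      also have "\<dots> \<le> card {x. ctr E u v w x}" using card_mono[OF fin2 ctr_nb_sub[OF sg uv w]] .
      finally show ?thesis using \<open>E w v\<close> True by simp
    next
      case False
      have sub: "insert u ({x. E w x} - {v}) \<subseteq> {x. ctr E u v w x}"
        using ctr_nb_sub[OF sg uv w] \<open>E w v\<close> w f(4) f(5)[of u] uv unfolding ctr_def by (cases "u = v") auto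
      have "card (insert u ({x. E w x} - {v})) = card ({x. E w x} - {v}) + 1"
        using False fin1 by simp
      also have "\<dots> = card {x. E w x}" using \<open>E w v\<close> fin1
        by (metis (mono_tags, lifting) One_nat_def Suc_pred add.right_neutral add_Suc_right card_Diff_singleton card_gt_0_iff empty_iff mem_Collect_eq)
      finally show ?thesis using card_mono[OF fin2 sub] by simp
    qed
  qed
qed

lemma ctr_edges_card:
  assumes sg: "simple_graph V E" and uv: "E u v"
  shows "card {(a,b). ctr E u v a b} \<le> card {(a,b). E a b}"
proof -
  define r where "r x = (if x = v then u else x)" for x
  have "{(a,b). ctr E u v a b} \<subseteq> (\<lambda>(a,b). (r a, r b)) ` {(a,b). E a b}"
  proof
    fix p assume "p \<in> {(a,b). ctr E u v a b}"
    then obtain a b where p: "p = (a,b)" "ctr E u v a b" by blast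
    then have abv: "a \<noteq> v" "b \<noteq> v" unfolding ctr_def by auto
    consider "E a b" | "a = u \<and> E v b" | "b = u \<and> E a v" using p(2) unfolding ctr_def by blast
    then show "p \<in> (\<lambda>(a,b). (r a, r b)) ` {(a,b). E a b}"
    proof cases
      case 1 then have "(r a, r b) = (a,b)" using abv r_def by simp
      then show ?thesis using 1 p(1) by (metis (mono_tags, lifting) case_prod_conv image_iff mem_Collect_eq)
    next
      case 2 then have "(r v, r b) = (a,b)" using abv r_def by simp
      then show ?thesis using 2 p(1) by (metis (mono_tags, lifting) case_prod_conv image_iff mem_Collect_eq)
    next
      case 3 then have "(r a, r v) = (a,b)" using abv r_def by simp
      then show ?thesis using 3 p(1) by (metis (mono_tags, lifting) case_prod_conv image_iff mem_Collect_eq)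
    qed
  qed
  then show ?thesis using edges_finite[OF sg]
    by (meson card_image_le card_mono finite_imageI le_trans)
qed

definition msr :: "'a set \<Rightarrow> ('a \<Rightarrow> 'a \<Rightarrow> bool) \<Rightarrow> nat" where
  "msr V E = card V + card {(a,b). E a b}"

definition md3 :: "'a set \<Rightarrow> ('a \<Rightarrow> 'a \<Rightarrow> bool) \<Rightarrow> bool" where
  "md3 V E = (\<forall>v\<in>V. 3 \<le> card {w. E v w})"

definition IHP :: "'a set \<Rightarrow> ('a \<Rightarrow> 'a \<Rightarrow> bool) \<Rightarrow> bool" where
  "IHP V E = (\<forall>V' (E'::'a \<Rightarrow> 'a \<Rightarrow> bool). simple_graph V' E' \<longrightarrow> V' \<noteq> {} \<longrightarrow> md3 V' E'
      \<longrightarrow> msr V' E' < msr V E \<longrightarrow> has_K4_minor V' E')"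

lemma contract_ok:
  assumes sg: "simple_graph V E" and md: "md3 V E" and ih: "IHP V E" and xy: "E x y"
    and common: "\<And>w. E x w \<Longrightarrow> E y w \<Longrightarrow> 4 \<le> card {t. E w t}"
    and merged: "3 \<le> card (({w. E x w} \<union> {w. E y w}) - {x,y})"
  shows "has_K4_minor V E"
proof -
  note f = sg_facts[OF sg]
  have sg2: "simple_graph (V - {y}) (ctr E x y)" by (rule ctr_simple[OF sg xy])
  have xV: "x \<in> V" "y \<in> V" using f xy by blast+
  have "x \<noteq> y" using xy f(5)[of x] by (cases "x = y") auto
  then have ne: "V - {y} \<noteq> {}" using xV by blast
  have md2: "md3 (V - {y}) (ctr E x y)"
    unfolding md3_def
  proof
    fix w assume w: "w \<in> V - {y}"
    show "3 \<le> card {t. ctr E x y w t}"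
    proof (cases "w = x")
      case True then show ?thesis using ctr_nb_u[OF sg xy] merged by simp
    next
      case False
      have wy: "w \<noteq> y" using w by blast
      have c: "card {t. E w t} \<le> card {t. ctr E x y w t} + (if E w x \<and> E w y then 1 else 0)"
        by (rule ctr_nb_card[OF sg xy False wy])
      have d: "3 \<le> card {t. E w t}" using md w unfolding md3_def by blast
      show ?thesis
      proof (cases "E w x \<and> E w y")
        case True
        have "E x w" "E y w" using True f(4) by blast+
        then have "4 \<le> card {t. E w t}" using common by blast
        then show ?thesis using c True by simp
      next
        case False
        then have "card {t. E w t} \<le> card {t. ctr E x y w t}" using c by (simp only: if_not_P[OF False]) simp
        then show ?thesis using d by linarith
      qed
    qed
  qed
  have "card (V - {y}) < card V" using xV(2) f(1) by (meson card_Diff1_less)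
  then have "msr (V - {y}) (ctr E x y) < msr V E"
    using ctr_edges_card[OF sg xy] unfolding msr_def by linarith
  then have "has_K4_minor (V - {y}) (ctr E x y)" using ih sg2 ne md2 unfolding IHP_def by blast
  then show ?thesis by (rule contract_lift[OF sg xy])
qed

lemma delete_ok:
  assumes sg: "simple_graph V E" and md: "md3 V E" and ih: "IHP V E" and pq: "E p q"
    and dp: "4 \<le> card {t. E p t}" and dq: "4 \<le> card {t. E q t}"
  shows "has_K4_minor V E"
proof -
  note f = sg_facts[OF sg]
  define E' where "E' a b = (E a b \<and> \<not>(a = p \<and> b = q) \<and> \<not>(a = q \<and> b = p))" for a b
  have sg2: "simple_graph V E'" using f unfolding simple_graph_def E'_def by blast
  have ne: "V \<noteq> {}" using f(2)[OF pq] by blast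
  have md2: "md3 V E'"
    unfolding md3_def
  proof
    fix w assume w: "w \<in> V"
    have fin: "finite {t. E w t}" using nb_finite[OF sg] by blast
    show "3 \<le> card {t. E' w t}"
    proof (cases "w = p \<or> w = q")
      case True
      have pq': "p \<noteq> q" using pq f(5) by blast
      have "{t. E' w t} = {t. E w t} - {if w = p then q else p}"
        using True pq' unfolding E'_def by auto
      moreover have "(if w = p then q else p) \<in> {t. E w t}" using True pq f(4)[OF pq] by auto
      moreover have "4 \<le> card {t. E w t}" using True dp dq by blast
      ultimately show ?thesis using fin by simp
    next
      case False
      then have "{t. E' w t} = {t. E w t}" unfolding E'_def by auto
      then show ?thesis using md w unfolding md3_def by simp
    qed
  qed
  have "{(a,b). E' a b} \<subset> {(a,b). E a b}" using pq unfolding E'_def by auto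
  then have "card {(a,b). E' a b} < card {(a,b). E a b}" by (rule psubset_card_mono[OF edges_finite[OF sg]])
  then have "msr V E' < msr V E" unfolding msr_def by simp
  then have "has_K4_minor V E'" using ih sg2 ne md2 unfolding IHP_def by blast
  then show ?thesis by (rule subgraph_lift) (auto simp: E'_def)
qed

lemma all4: "(\<forall>i<(4::nat). P i) \<longleftrightarrow> P 0 \<and> P 1 \<and> P 2 \<and> P 3"
  by (auto simp: less_Suc_eq eval_nat_numeral)

lemma clique_K4:
  assumes sg: "simple_graph V E" and e: "E a b" "E a c" "E a d" "E b c" "E b d" "E c d"
  shows "has_K4_minor V E"
proof -
  note f = sg_facts[OF sg]
  define B :: "nat \<Rightarrow> _ set" where "B i = {[a,b,c,d] ! i}" for i
  have V: "a \<in> V" "b \<in> V" "c \<in> V" "d \<in> V" using f e by blast+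
  have dist: "a \<noteq> b" "a \<noteq> c" "a \<noteq> d" "b \<noteq> c" "b \<noteq> d" "c \<noteq> d" using e f(5) by - (rule notI, simp)+
  have cs: "\<And>p. p \<in> V \<Longrightarrow> connected_set V E {p}" unfolding connected_set_def by auto
  have B: "B 0 = {a}" "B 1 = {b}" "B 2 = {c}" "B 3 = {d}" unfolding B_def by (simp_all add: eval_nat_numeral)
  have "\<forall>i<4. connected_set V E (B i)" unfolding all4 B using cs V by simp
  moreover have "\<forall>i<4. \<forall>j<4. i \<noteq> j \<longrightarrow> B i \<inter> B j = {}" unfolding all4 B using dist by auto
  moreover have "\<forall>i<4. \<forall>j<4. i \<noteq> j \<longrightarrow> (\<exists>x\<in>B i. \<exists>y\<in>B j. E x y)" 
  proof -
    have sy: "E b a" "E c a" "E d a" "E c b" "E d b" "E d c" using f(4) e by blast+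
    show ?thesis unfolding all4 B by (simp add: e sy)
  qed
  ultimately show ?thesis unfolding has_K4_minor_def by blast
qed

lemma card_ge3I:
  assumes "finite S" "x \<in> S" "y \<in> S" "w \<in> S" "x \<noteq> y" "x \<noteq> w" "y \<noteq> w"
  shows "3 \<le> card S"
proof -
  have "card {x,y,w} = 3" using assms by simp
  moreover have "{x,y,w} \<subseteq> S" using assms by blast
  ultimately show ?thesis using card_mono[OF assms(1)] by metis
qed

lemma diamond_ok:
  assumes sg: "simple_graph V E" and md: "md3 V E" and ih: "IHP V E"
    and zN: "{w. E z w} = {a,b,c}" and bN: "{w. E b w} = {z,a,c}" and nac: "\<not> E a c"
    and dist: "z \<noteq> a" "z \<noteq> b" "z \<noteq> c" "a \<noteq> b" "a \<noteq> c" "b \<noteq> c"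
    and da: "4 \<le> card {t. E a t}" and dc: "4 \<le> card {t. E c t}"
  shows "has_K4_minor V E"
proof -
  note f = sg_facts[OF sg]
  have e: "E z a" "E z b" "E z c" "E b a" "E b c" using zN bN by blast+
  have e2: "E a z" "E b z" "E c z" "E a b" "E c b" using e f(4) by blast+
  have V: "a \<in> V" "b \<in> V" "c \<in> V" "z \<in> V" using f(3)[OF e(1)] f(3)[OF e(2)] f(3)[OF e(3)] f(2)[OF e(1)] by blast+
  define E' where "E' p q = ((E p q \<and> p \<noteq> z \<and> p \<noteq> b \<and> q \<noteq> z \<and> q \<noteq> b) \<or> (p = a \<and> q = c) \<or> (p = c \<and> q = a))" for p q
  define V' where "V' = V - {z,b}"
  have "\<forall>u v. E' u v \<longrightarrow> u \<in> V' \<and> v \<in> V'" unfolding E'_def V'_def using f(2,3) V dist by blast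
  moreover have "\<forall>u v. E' u v \<longrightarrow> E' v u" unfolding E'_def using f(4) by blast
  moreover have "\<forall>u. \<not> E' u u" unfolding E'_def using f(5) dist by blast
  moreover have "finite V'" using f(1) unfolding V'_def by blast
  ultimately have sg2: "simple_graph V' E'" unfolding simple_graph_def by blast
  have ne: "V' \<noteq> {}" using V dist unfolding V'_def by blast
  have md2: "md3 V' E'"
    unfolding md3_def
  proof
    fix w assume w: "w \<in> V'"
    have fin: "finite {t. E w t}" using nb_finite[OF sg] by blast
    have dw: "3 \<le> card {t. E w t}" using md w unfolding md3_def V'_def by blast
    have wzb: "w \<noteq> z" "w \<noteq> b" using w unfolding V'_def by blast+
    consider "w = a" | "w = c" | "w \<noteq> a \<and> w \<noteq> c" by blast
    then show "3 \<le> card {t. E' w t}"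
    proof cases
      case 1
      have eq: "{t. E' w t} = insert c ({t. E a t} - {z,b})" unfolding E'_def using 1 dist nac by auto
      have "card ({t. E a t} - {z,b}) = card {t. E a t} - 2"
        using e2 dist fin 1 by (subst card_Diff_subset) auto
      moreover have "c \<notin> {t. E a t} - {z,b}" using nac by blast
      ultimately show ?thesis unfolding eq using da fin 1 by simp
    next
      case 2
      have nca: "\<not> E c a" using nac f(4) by blast
      have eq: "{t. E' w t} = insert a ({t. E c t} - {z,b})" unfolding E'_def using 2 dist nca by auto
      have "card ({t. E c t} - {z,b}) = card {t. E c t} - 2"
        using e2 dist fin 2 by (subst card_Diff_subset) auto
      moreover have "a \<notin> {t. E c t} - {z,b}" using nca by blast
      ultimately show ?thesis unfolding eq using dc fin 2 by simp
    next
      case 3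
      have "\<not> E w z"
      proof
        assume "E w z" then have "E z w" using f(4) by blast
        then show False using zN 3 wzb by blast
      qed
      moreover have "\<not> E w b"
      proof
        assume "E w b" then have "E b w" using f(4) by blast
        then show False using bN 3 wzb by blast
      qed
      ultimately have "{t. E' w t} = {t. E w t}" unfolding E'_def using 3 wzb by auto
      then show ?thesis using dw by simp
    qed
  qed
  have "card V' < card V" unfolding V'_def using V f(1) dist
    by (metis Diff_insert2 card_Diff2_less)
  moreover have "card {(p,q). E' p q} \<le> card {(p,q). E p q}"
  proof -
    define r where "r x = (if x = z then a else x)" for x
    have "{(p,q). E' p q} \<subseteq> (\<lambda>(p,q). (r p, r q)) ` {(p,q). E p q}"
    proof
      fix x assume "x \<in> {(p,q). E' p q}"
      then obtain p q where x: "x = (p,q)" "E' p q" by blast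
      consider "E p q \<and> p \<noteq> z \<and> q \<noteq> z" | "p = a \<and> q = c" | "p = c \<and> q = a" using x(2) unfolding E'_def by blast
      then show "x \<in> (\<lambda>(p,q). (r p, r q)) ` {(p,q). E p q}"
      proof cases
        case 1 then have "(r p, r q) = (p,q)" using r_def by simp
        then show ?thesis using 1 x(1) by (metis (mono_tags, lifting) case_prod_conv image_iff mem_Collect_eq)
      next
        case 2 then have "(r z, r c) = (p,q)" using r_def dist by simp
        then show ?thesis using e x(1) by (metis (mono_tags, lifting) case_prod_conv image_iff mem_Collect_eq)
      next
        case 3 then have "(r c, r z) = (p,q)" using r_def dist by simp
        then show ?thesis using e2 x(1) by (metis (mono_tags, lifting) case_prod_conv image_iff mem_Collect_eq)
      qed
    qed
    then show ?thesis using edges_finite[OF sg]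
      by (meson card_image_le card_mono finite_imageI le_trans)
  qed
  ultimately have "msr V' E' < msr V E" unfolding msr_def by linarith
  then have K': "has_K4_minor V' E'" using ih sg2 ne md2 unfolding IHP_def by blast
  define Eb where "Eb p q = (E p q \<and> p \<noteq> b \<and> q \<noteq> b)" for p q
  have "\<forall>u v. Eb u v \<longrightarrow> u \<in> V - {b} \<and> v \<in> V - {b}" unfolding Eb_def using f(2,3) by blast
  moreover have "\<forall>u v. Eb u v \<longrightarrow> Eb v u" unfolding Eb_def using f(4) by blast
  moreover have "\<forall>u. \<not> Eb u u" unfolding Eb_def using f(5) by blast
  moreover have "finite (V - {b})" using f(1) by blast
  ultimately have sgb: "simple_graph (V - {b}) Eb" unfolding simple_graph_def by blast
  have az: "Eb a z" unfolding Eb_def using e2 dist by blast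
  have "V - {b} - {z} = V'" unfolding V'_def by blast
  moreover have "\<And>p q. E' p q \<Longrightarrow> ctr Eb a z p q"
    unfolding E'_def ctr_def Eb_def using e e2 dist f(5) by blast
  ultimately have "has_K4_minor (V - {b} - {z}) (ctr Eb a z)" using K' subgraph_lift[of V' E' V'] by blast
  then have "has_K4_minor (V - {b}) Eb" by (rule contract_lift[OF sgb az])
  then show ?thesis by (rule subgraph_lift) (auto simp: Eb_def)
qed

lemma exists_other:
  assumes "finite S" "2 \<le> card S"
  shows "\<exists>x\<in>S. x \<noteq> a"
proof (rule ccontr)
  assume "\<not> (\<exists>x\<in>S. x \<noteq> a)"
  then have "S \<subseteq> {a}" by blast
  then have "card S \<le> card {a}" by (rule card_mono[OF finite.insertI[OF finite.emptyI]])
  then show False using assms(2) by simp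
qed

lemma step6_ok:
  assumes sg: "simple_graph V E" and md: "md3 V E" and ih: "IHP V E"
    and zN: "{w. E z w} = {a,b,c}" and bN: "{w. E b w} = {z,a,c}" and nac: "\<not> E a c"
    and dist: "z \<noteq> a" "z \<noteq> b" "z \<noteq> c" "a \<noteq> b" "a \<noteq> c" "b \<noteq> c"
    and da: "card {t. E a t} = 3"
  shows "has_K4_minor V E"
proof -
  note f = sg_facts[OF sg]
  have e: "E z a" "E z b" "E z c" "E b a" "E b c" using zN bN by blast+
  have e2: "E a z" "E a b" using f(4)[OF e(1)] f(4)[OF e(4)] by blast+
  have finA: "finite {t. E a t}" using nb_finite[OF sg] by blast
  have "{z,b} \<subseteq> {t. E a t}" using e2 by blast
  moreover have "card {z,b} = 2" using dist by simp
  ultimately have "{z,b} \<noteq> {t. E a t}" using da by auto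
  then obtain a' where a': "E a a'" "a' \<noteq> z" "a' \<noteq> b" using \<open>{z,b} \<subseteq> {t. E a t}\<close> by blast
  have a'c: "a' \<noteq> c" using a' nac by blast
  have aa': "a \<noteq> a'" using a'(1) f(5)[of a] by blast
  have sub: "{z,b,a'} \<subseteq> {t. E a t}" using e2 a' by blast
  have "card {z,b,a'} = 3" using dist a' by simp
  then have aN: "{t. E a t} = {z,b,a'}" using card_subset_eq[OF finA sub] da by simp
  have na'z: "\<not> E a' z"
  proof
    assume "E a' z" then have "E z a'" using f(4) by blast
    then have "a' \<in> {a,b,c}" using zN by blast
    then show False using aa' a' a'c by blast
  qed
  have na'b: "\<not> E a' b"
  proof
    assume "E a' b" then have "E b a'" using f(4) by blast
    then have "a' \<in> {z,a,c}" using bN by blast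
    then show False using aa' a' a'c by blast
  qed
  have common: "\<And>w. E a w \<Longrightarrow> E a' w \<Longrightarrow> 4 \<le> card {t. E w t}"
  proof -
    fix w assume w: "E a w" "E a' w"
    then have "w \<in> {z,b,a'}" using aN by blast
    then show "4 \<le> card {t. E w t}" using w na'z na'b f(5)[of a'] by blast
  qed
  have a'V: "a' \<in> V" using f(3)[OF a'(1)] .
  have "3 \<le> card {t. E a' t}" using md a'V unfolding md3_def by blast
  moreover have "finite {t. E a' t}" using nb_finite[OF sg] by blast
  ultimately obtain d where d: "E a' d" "d \<noteq> a" using exists_other[of "{t. E a' t}" a] by force
  have dz: "d \<noteq> z" "d \<noteq> b" using d na'z na'b by blast+
  have da': "d \<noteq> a'" using d f(5)[of a'] by blast
  have finM: "finite (({w. E a w} \<union> {w. E a' w}) - {a,a'})" using nb_finite[OF sg] by blast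
  have "3 \<le> card (({w. E a w} \<union> {w. E a' w}) - {a,a'})"
    by (rule card_ge3I[OF finM, of z b d]) (use e2 d dz da' dist a' aa' in auto)
  then show ?thesis using contract_ok[OF sg md ih a'(1) common] by blast
qed

lemma isolated_ok:
  assumes sg: "simple_graph V E" and md: "md3 V E" and ih: "IHP V E"
    and zy: "E z y" and iso: "\<And>w. E z w \<Longrightarrow> \<not> E y w"
  shows "has_K4_minor V E"
proof -
  note f = sg_facts[OF sg]
  have yV: "y \<in> V" "z \<in> V" using f(3)[OF zy] f(2)[OF zy] by blast+
  have finz: "finite {w. E z w}" and finy: "finite {w. E y w}" using nb_finite[OF sg] by blast+
  have dz: "3 \<le> card {w. E z w}" and dy: "3 \<le> card {w. E y w}" using md yV unfolding md3_def by blast+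
  obtain e where e: "E z e" "e \<noteq> y" using exists_other[of "{w. E z w}" y] finz dz by force
  have eny: "\<not> E y e" using iso e(1) by blast
  have yz: "E y z" using f(4)[OF zy] .
  have c1: "card ({w. E y w} - {z}) = card {w. E y w} - 1" using yz finy by simp
  have sub: "insert e ({w. E y w} - {z}) \<subseteq> ({w. E z w} \<union> {w. E y w}) - {z,y}"
    using e f(5)[of y] f(5)[of z] by auto
  have "card (insert e ({w. E y w} - {z})) = card ({w. E y w} - {z}) + 1" using eny finy by simp
  moreover have "card (insert e ({w. E y w} - {z})) \<le> card (({w. E z w} \<union> {w. E y w}) - {z,y})"
    by (rule card_mono[OF _ sub]) (use finz finy in blast)
  ultimately have "3 \<le> card (({w. E z w} \<union> {w. E y w}) - {z,y})" using c1 dy by linarith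
  moreover have "\<And>w. E z w \<Longrightarrow> E y w \<Longrightarrow> 4 \<le> card {t. E w t}" using iso by blast
  ultimately show ?thesis using contract_ok[OF sg md ih zy] by blast
qed

lemma config_ok:
  assumes sg: "simple_graph V E" and md: "md3 V E" and ih: "IHP V E"
    and zN: "{w. E z w} = {a,b,c}" and dist: "a \<noteq> b" "a \<noteq> c" "b \<noteq> c"
    and ab: "E a b" and bc: "E b c" and nac: "\<not> E a c"
  shows "has_K4_minor V E"
proof -
  note f = sg_facts[OF sg]
  have e: "E z a" "E z b" "E z c" using zN by blast+
  have zd: "z \<noteq> a" "z \<noteq> b" "z \<noteq> c" using e f(5)[of z] by blast+
  have V: "a \<in> V" "b \<in> V" "c \<in> V" "z \<in> V" using f(3)[OF e(1)] f(3)[OF e(2)] f(3)[OF e(3)] f(2)[OF e(1)] by blast+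
  have fin: "\<And>v. finite {t. E v t}" using nb_finite[OF sg] by blast
  have deg: "\<And>v. v \<in> V \<Longrightarrow> 3 \<le> card {t. E v t}" using md unfolding md3_def by blast
  show ?thesis
  proof (cases "4 \<le> card {t. E b t}")
    case True
    have common: "\<And>w. E z w \<Longrightarrow> E a w \<Longrightarrow> 4 \<le> card {t. E w t}"
    proof -
      fix w assume w: "E z w" "E a w"
      then have "w \<in> {a,b,c}" using zN by blast
      moreover have "w \<noteq> a" using w f(5)[of a] by blast
      moreover have "w \<noteq> c" using w nac by blast
      ultimately show "4 \<le> card {t. E w t}" using True by blast
    qed
    have "2 \<le> card ({t. E a t} - {z})"
      using deg[OF V(1)] fin[of a] f(4)[OF e(1)] by simp
    then obtain d where d: "d \<in> {t. E a t} - {z}" "d \<noteq> b" using exists_other[of "{t. E a t} - {z}" b] fin[of a] by blast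
    have dd: "E a d" "d \<noteq> z" "d \<noteq> c" "d \<noteq> a" using d nac f(5)[of a] by blast+
    have finM: "finite (({w. E z w} \<union> {w. E a w}) - {z,a})" using fin by blast
    have "3 \<le> card (({w. E z w} \<union> {w. E a w}) - {z,a})"
      by (rule card_ge3I[OF finM, of b c d]) (use e dd d dist zd in auto)
    then show ?thesis using contract_ok[OF sg md ih e(1) common] by blast
  next
    case False
    then have db: "card {t. E b t} = 3" using deg[OF V(2)] by simp
    have sub: "{z,a,c} \<subseteq> {t. E b t}" using f(4)[OF e(2)] f(4)[OF ab] bc by blast
    have "card {z,a,c} = 3" using zd dist by simp
    then have bN: "{t. E b t} = {z,a,c}" using card_subset_eq[OF fin sub] db by simp
    show ?thesis
    proof (cases "4 \<le> card {t. E a t} \<and> 4 \<le> card {t. E c t}")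
      case True
      then show ?thesis using diamond_ok[OF sg md ih zN bN nac zd dist] by blast
    next
      case False
      then consider "card {t. E a t} = 3" | "card {t. E c t} = 3" using deg V by force
      then show ?thesis
      proof cases
        case 1
        then show ?thesis using step6_ok[OF sg md ih zN bN nac zd dist] by blast
      next
        case 2
        have zN': "{w. E z w} = {c,b,a}" using zN by blast
        have bN': "{w. E b w} = {z,c,a}" using bN by blast
        have nca: "\<not> E c a" using nac f(4) by blast
        show ?thesis using step6_ok[OF sg md ih zN' bN' nca] zd dist 2 by blast
      qed
    qed
  qed
qed

theorem deg3_K4:
  assumes "simple_graph V E" "V \<noteq> {}" "md3 V E"
  shows "has_K4_minor V E"
  using assms
proof (induction "msr V E" arbitrary: V E rule: less_induct)
  case less
  note sg = less.prems(1) and md = less.prems(3)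
  note f = sg_facts[OF sg]
  have ih: "IHP V E" unfolding IHP_def using less.hyps by blast
  have fin: "\<And>v. finite {t. E v t}" using nb_finite[OF sg] by blast
  have deg: "\<And>v. v \<in> V \<Longrightarrow> 3 \<le> card {t. E v t}" using md unfolding md3_def by blast
  show ?case
  proof (cases "\<exists>p q. E p q \<and> 4 \<le> card {t. E p t} \<and> 4 \<le> card {t. E q t}")
    case True
    then obtain p q where "E p q" "4 \<le> card {t. E p t}" "4 \<le> card {t. E q t}" by blast
    then show ?thesis using delete_ok[OF sg md ih] by blast
  next
    case False
    obtain v where v: "v \<in> V" using less.prems(2) by blast
    have "card {t. E v t} \<noteq> 0" using deg[OF v] by linarith
    then obtain q where q: "E v q" using fin[of v] by (metis card.empty Collect_empty_eq)
    have qV: "q \<in> V" using f(3)[OF q] .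
    obtain z where zV: "z \<in> V" and dz: "card {t. E z t} = 3"
    proof (cases "4 \<le> card {t. E v t}")
      case True
      then have "\<not> 4 \<le> card {t. E q t}" using False q by blast
      then show ?thesis using that[OF qV] deg[OF qV] by simp
    next
      case False
      then show ?thesis using that[OF v] deg[OF v] by simp
    qed
    obtain a b c where zN: "{t. E z t} = {a,b,c}" and dist: "a \<noteq> b" "b \<noteq> c" "a \<noteq> c"
      using dz unfolding card_3_iff by blast
    have e: "E z a" "E z b" "E z c" using zN by blast+
    show ?thesis
    proof (cases "(\<exists>w. E z w \<and> E a w) \<and> (\<exists>w. E z w \<and> E b w) \<and> (\<exists>w. E z w \<and> E c w)")
      case False
      then show ?thesis using isolated_ok[OF sg md ih e(1)] isolated_ok[OF sg md ih e(2)] isolated_ok[OF sg md ih e(3)] by blast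
    next
      case True
      have na: "\<not> E a a" "\<not> E b b" "\<not> E c c" using f(5) by blast+
      have hlp: "\<And>y. \<exists>w. E z w \<and> E y w \<Longrightarrow> E y a \<or> E y b \<or> E y c"
      proof -
        fix y assume "\<exists>w. E z w \<and> E y w"
        then obtain w where w: "w \<in> {t. E z t}" "E y w" by blast
        then have "w \<in> {a,b,c}" using zN by simp
        then show "E y a \<or> E y b \<or> E y c" using w(2) by blast
      qed
      have "E a b \<or> E a c" using hlp[of a] True na(1) by blast
      moreover have "E b a \<or> E b c" using hlp[of b] True na(2) by blast
      moreover have "E c a \<or> E c b" using hlp[of c] True na(3) by blast
      moreover have sy: "E a b = E b a" "E a c = E c a" "E b c = E c b" using f(4) by blast+
      ultimately consider "E a b \<and> E b c \<and> E a c" | "E a b \<and> E b c \<and> \<not> E a c"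
        | "E a c \<and> E c b \<and> \<not> E a b" | "E b a \<and> E a c \<and> \<not> E b c" by blast
      then show ?thesis
      proof cases
        case 1 then show ?thesis using clique_K4[OF sg e] by blast
      next
        case 2 then show ?thesis using config_ok[OF sg md ih zN] dist by blast
      next
        case 3
        have zN': "{t. E z t} = {a,c,b}" using zN by blast
        show ?thesis using config_ok[OF sg md ih zN'] dist 3 by blast
      next
        case 4
        have zN': "{t. E z t} = {b,a,c}" using zN by blast
        show ?thesis using config_ok[OF sg md ih zN'] dist 4 by blast
      qed
    qed
  qed
qed

lemma low_degree:
  assumes "simple_graph V E" "K4_minor_free V E" "V \<noteq> {}"
  shows "\<exists>v\<in>V. card {w. E v w} \<le> 2"
proof (rule ccontr)
  assume "\<not> (\<exists>v\<in>V. card {w. E v w} \<le> 2)"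
  then have "md3 V E" unfolding md3_def by force
  then have "has_K4_minor V E" using deg3_K4 assms(1,3) by blast
  then show False using assms(2) unfolding K4_minor_free_def by blast
qed

lemma three_col:
  assumes "simple_graph V E" "K4_minor_free V E"
  shows "\<exists>c. proper_3_coloring V E c"
  using assms
proof (induction "card V" arbitrary: V E rule: less_induct)
  case less
  note sg = less.prems(1)
  note f = sg_facts[OF sg]
  show ?case
  proof (cases "V = {}")
    case True
    have "proper_3_coloring V E (\<lambda>_. 0)" unfolding proper_3_coloring_def using True f(2) by blast
    then show ?thesis by blast
  next
    case False
    obtain v where v: "v \<in> V" "card {w. E v w} \<le> 2" using low_degree[OF sg less.prems(2) False] by blast
    define E' where "E' p q = (E p q \<and> p \<noteq> v \<and> q \<noteq> v)" for p q
    have "\<forall>u w. E' u w \<longrightarrow> u \<in> V - {v} \<and> w \<in> V - {v}" unfolding E'_def using f(2,3) by blast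
    moreover have "\<forall>u w. E' u w \<longrightarrow> E' w u" unfolding E'_def using f(4) by blast
    moreover have "\<forall>u. \<not> E' u u" unfolding E'_def using f(5) by blast
    moreover have "finite (V - {v})" using f(1) by blast
    ultimately have sg2: "simple_graph (V - {v}) E'" unfolding simple_graph_def by blast
    have kf: "K4_minor_free (V - {v}) E'"
      unfolding K4_minor_free_def
    proof
      assume "has_K4_minor (V - {v}) E'"
      then have "has_K4_minor V E" by (rule subgraph_lift) (auto simp: E'_def)
      then show False using less.prems(2) unfolding K4_minor_free_def by blast
    qed
    have "card (V - {v}) < card V" using v(1) f(1) by (meson card_Diff1_less)
    then obtain c' where c': "proper_3_coloring (V - {v}) E' c'" using less.hyps sg2 kf by blast
    have fin: "finite {w. E v w}" using nb_finite[OF sg] by blast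
    have "card (c' ` {w. E v w}) \<le> 2" using card_image_le[OF fin, of c'] v(2) by linarith
    moreover have "card {0::nat,1,2} = 3" by simp
    ultimately have "\<not> {0,1,2} \<subseteq> c' ` {w. E v w}"
      using card_mono[OF finite_imageI[OF fin], of "{0,1,2}" c'] by linarith
    then obtain k :: nat where k: "k < 3" "k \<notin> c' ` {w. E v w}" by force
    define c where "c = c'(v := k)"
    have "\<forall>x\<in>V. c x < 3" using c' k(1) unfolding c_def proper_3_coloring_def by auto
    moreover have "\<forall>x y. E x y \<longrightarrow> c x \<noteq> c y"
    proof (intro allI impI)
      fix x y assume xy: "E x y"
      have xy': "x \<noteq> y" using xy f(5)[of x] by blast
      consider "x = v" | "y = v" | "x \<noteq> v \<and> y \<noteq> v" by blast
      then show "c x \<noteq> c y"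
      proof cases
        case 1 then have "y \<in> {w. E v w}" using xy by blast
        then show ?thesis using k(2) 1 xy' unfolding c_def by force
      next
        case 2 then have "x \<in> {w. E v w}" using f(4)[OF xy] by blast
        then show ?thesis using k(2) 2 xy' unfolding c_def by force
      next
        case 3 then have "E' x y" using xy unfolding E'_def by blast
        then show ?thesis using c' 3 unfolding c_def proper_3_coloring_def by auto
      qed
    qed
    ultimately show ?thesis unfolding proper_3_coloring_def by blast
  qed
qed

lemma chain_color:
  assumes h: "diamond_chain_hom V E n u v w" and c: "proper_3_coloring V E c"
  shows "i \<le> n \<Longrightarrow> c (u i) = c (u 0)"
proof (induction i)
  case 0 then show ?case by simp
next
  case (Suc j)
  have cV: "\<forall>x\<in>V. c x < 3" and cE: "\<forall>x y. E x y \<longrightarrow> c x \<noteq> c y"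
    using c unfolding proper_3_coloring_def by blast+
  have H1: "\<forall>i\<in>{0..n}. u i \<in> V" and H2: "\<forall>i\<in>{1..n}. v i \<in> V \<and> w i \<in> V"
    and H3: "\<forall>i\<in>{1..n}. E (u (i - 1)) (v i) \<and> E (u (i - 1)) (w i) \<and> E (v i) (w i)
                  \<and> E (v i) (u i) \<and> E (w i) (u i)"
    using h unfolding diamond_chain_hom_def by blast+
  have j1: "Suc j \<in> {1..n}" "j \<in> {0..n}" "Suc j \<in> {0..n}" using Suc.prems by auto
  have e0: "E (u (Suc j - 1)) (v (Suc j)) \<and> E (u (Suc j - 1)) (w (Suc j)) \<and> E (v (Suc j)) (w (Suc j))
                  \<and> E (v (Suc j)) (u (Suc j)) \<and> E (w (Suc j)) (u (Suc j))"
    using bspec[OF H3 j1(1)] .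
  then have e: "E (u j) (v (Suc j))" "E (u j) (w (Suc j))" "E (v (Suc j)) (w (Suc j))"
    "E (v (Suc j)) (u (Suc j))" "E (w (Suc j)) (u (Suc j))" by simp_all
  have inV: "u j \<in> V" "v (Suc j) \<in> V" "w (Suc j) \<in> V" "u (Suc j) \<in> V"
    using bspec[OF H1 j1(2)] bspec[OF H2 j1(1)] bspec[OF H1 j1(3)] by blast+
  have lt: "c (u j) < 3" "c (v (Suc j)) < 3" "c (w (Suc j)) < 3" "c (u (Suc j)) < 3"
    using cV inV by blast+
  have ne: "c (u j) \<noteq> c (v (Suc j))" "c (u j) \<noteq> c (w (Suc j))" "c (v (Suc j)) \<noteq> c (w (Suc j))"
    "c (v (Suc j)) \<noteq> c (u (Suc j))" "c (w (Suc j)) \<noteq> c (u (Suc j))"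
    using cE e by blast+
  have "c (u (Suc j)) = c (u j)" using lt ne by arith
  then show ?case using Suc by simp
qed

lemma cbd_same:
  assumes "connected_by_diamonds V E X" "proper_3_coloring V E c" "p \<in> X" "q \<in> X"
  shows "c p = c q"
proof -
  obtain n u v w where h: "diamond_chain_hom V E n u v w" "X \<subseteq> u ` {0..n}"
    using assms(1) unfolding connected_by_diamonds_def by blast
  obtain i where i: "i \<in> {0..n}" "p = u i" using h(2) assms(3) by blast
  obtain j where j: "j \<in> {0..n}" "q = u j" using h(2) assms(4) by blast
  have "i \<le> n" "j \<le> n" using i(1) j(1) by simp_all
  then have "c (u i) = c (u 0)" "c (u j) = c (u 0)" using chain_color[OF h(1) assms(2)] by blast+
  then show ?thesis using i(2) j(2) by simp
qed

lemma card2_le: "card {q, r} \<le> 2"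
  by (cases "q = r") simp_all

lemma card3_le2: "p = q \<or> q = r \<or> p = r \<Longrightarrow> card {p,q,r} \<le> 2"
proof -
  assume "p = q \<or> q = r \<or> p = r"
  then consider "{p,q,r} = {q,r}" | "{p,q,r} = {p,r}" by blast
  then show ?thesis using card2_le by metis
qed

theorem mainTheorem9:
  fixes V :: "'a set" and E :: "'a \<Rightarrow> 'a \<Rightarrow> bool" and x x' y z :: 'a
  assumes "simple_graph V E" and "K4_minor_free V E"
    and "E x x'"
    and "y \<in> V" and "z \<in> V" and "y \<noteq> z"
    and "y \<notin> {x, x'}" and "z \<notin> {x, x'}"
  shows "feasible V E {x, y, z} \<or> feasible V E {x', y, z}"
proof -
  note f = sg_facts[OF assms(1)]
  obtain c where c: "proper_3_coloring V E c" using three_col[OF assms(1,2)] by blast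
  have xV: "x \<in> V" "x' \<in> V" using f(2)[OF assms(3)] f(3)[OF assms(3)] by blast+
  have cxx: "c x \<noteq> c x'" using c assms(3) unfolding proper_3_coloring_def by simp
  have cV: "\<forall>x\<in>V. c x < 3" using c unfolding proper_3_coloring_def by blast
  have lt: "c x < 3" "c x' < 3" "c y < 3" "c z < 3" using cV xV assms(4,5) by blast+
  have sub: "{x,y,z} \<subseteq> V" "{x',y,z} \<subseteq> V" using xV assms(4,5) by blast+
  have card: "card {x,y,z} = 3" "card {x',y,z} = 3" using assms(6,7,8) by auto
  have im: "c ` {x,y,z} = {c x, c y, c z}" "c ` {x',y,z} = {c x', c y, c z}" by auto
  have F1: "feasible V E {x,y,z}" if "\<not> connected_by_diamonds V E {x,y,z}" "c x = c y \<or> c y = c z \<or> c x = c z"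
  proof -
    have "card (c ` {x,y,z}) \<le> 2" unfolding im(1) by (rule card3_le2[OF that(2)])
    then show ?thesis unfolding feasible_def using sub(1) card(1) that(1) c by blast
  qed
  have F2: "feasible V E {x',y,z}" if "\<not> connected_by_diamonds V E {x',y,z}" "c x' = c y \<or> c y = c z \<or> c x' = c z"
  proof -
    have "card (c ` {x',y,z}) \<le> 2" unfolding im(2) by (rule card3_le2[OF that(2)])
    then show ?thesis unfolding feasible_def using sub(2) card(2) that(1) c by blast
  qed
  show ?thesis
  proof (cases "connected_by_diamonds V E {x,y,z}")
    case True
    have e1: "c x = c y" "c y = c z" using cbd_same[OF True c, of x y] cbd_same[OF True c, of y z] by blast+
    have "\<not> connected_by_diamonds V E {x',y,z}"
    proof
      assume "connected_by_diamonds V E {x',y,z}"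
      then have "c x' = c y" using cbd_same[OF _ c, of "{x',y,z}" x' y] by blast
      then show False using e1 cxx by simp
    qed
    then show ?thesis using F2 e1 by blast
  next
    case False
    show ?thesis
    proof (cases "connected_by_diamonds V E {x',y,z}")
      case True
      have "c y = c z" using cbd_same[OF True c, of y z] by blast
      then show ?thesis using F1 False by blast
    next
      case False2: False
      have "(c x = c y \<or> c y = c z \<or> c x = c z) \<or> (c x' = c y \<or> c y = c z \<or> c x' = c z)"
        using lt cxx by arith
      then show ?thesis using F1 F2 False False2 by blast
    qed
  qed
qed

end
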